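(* Let $C\subset\mathbb{R}^p$ be a closed convex pointed cone containing $0$ with nonempty interior such that $P\subset\mathrm{int}(C)\cup\{0\}$. There exists a constant $M(C,P)\ge0$ such that for all $K_1,K_2\in\mathcal{K}(C,P)$, $$\mathcal{H}\big(\mathcal{E}(K_1,P),\mathcal{E}(K_2,P)\big)\le M(C,P)\,\mathcal{H}(K_1,K_2).$$
   Context: $\mathbb{R}^p$ carries the Euclidean norm. $P\subset\mathbb{R}^p$ is a closed convex pointed ($P\cap(-P)=\{0\}$) cone containing $0$ with nonempty interior. For nonempty $S\subset\mathbb{R}^p$ and such a cone $Q$, $\mathcal{E}(S,Q)=\{y\in S:(y-Q)\cap S=\{y\}\}$. $\mathcal{K}(C,P)$ is the set of nonempty compact $K\subset\mathbb{R}^p$ with $\mathcal{E}(K,P)=\mathcal{E}(K,C)$. For nonempty bounded $M_1,M_2$, the Hausdorff distance is $\mathcal{H}(M_1,M_2)=\max\{\sup_{m_1\in M_1}d(m_1,M_2),\sup_{m_2\in M_2}d(m_2,M_1)\}$, $d(y,S)=\inf_{m\in S}\|y-m\|$. *)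

theory Defs
  imports "HOL-Analysis.Analysis"
begin

definition good_cone :: "'a::euclidean_space set \<Rightarrow> bool" where
  "good_cone Q \<longleftrightarrow> closed Q \<and> convex Q \<and> cone Q \<and> 0 \<in> Q \<and>
     Q \<inter> uminus ` Q = {0} \<and> interior Q \<noteq> {}"

definition eff :: "'a::euclidean_space set \<Rightarrow> 'a set \<Rightarrow> 'a set" where
  "eff S Q = {y \<in> S. ((\<lambda>q. y - q) ` Q) \<inter> S = {y}}"

definition Kclass :: "'a::euclidean_space set \<Rightarrow> 'a set \<Rightarrow> 'a set set" where
  "Kclass C P = {K. K \<noteq> {} \<and> compact K \<and> eff K P = eff K C}"

text \<open>Hausdorff distance as in the paper (for nonempty bounded sets).\<close>
definition hdist :: "'a::euclidean_space set \<Rightarrow> 'a set \<Rightarrow> real" where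
  "hdist M1 M2 = max (SUP m1\<in>M1. infdist m1 M2) (SUP m2\<in>M2. infdist m2 M1)"

end

theory Submission
  imports Defs
begin

lemma gc_closed: "good_cone Q \<Longrightarrow> closed Q"
  unfolding good_cone_def by (elim conjE)

lemma gc_zero: "good_cone Q \<Longrightarrow> (0::'a::euclidean_space) \<in> Q"
  unfolding good_cone_def by (elim conjE)

lemma gc_cc: "good_cone Q \<Longrightarrow> (\<forall>x\<in>Q. \<forall>y\<in>Q. x + y \<in> Q) \<and> (\<forall>x\<in>Q. \<forall>c\<ge>0. c *\<^sub>R x \<in> Q)"
  unfolding good_cone_def
  apply (elim conjE)
  apply (rule convex_cone[THEN iffD1])
  apply (rule conjI)
   apply assumption+
  done

lemma gc_add: "good_cone Q \<Longrightarrow> x \<in> Q \<Longrightarrow> y \<in> Q \<Longrightarrow> x + y \<in> Q"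
  using gc_cc[of Q] by blast

lemma gc_scale: "good_cone Q \<Longrightarrow> x \<in> Q \<Longrightarrow> c \<ge> 0 \<Longrightarrow> c *\<^sub>R x \<in> Q"
  using gc_cc[of Q] by blast

lemma gc_sum:
  assumes g: "good_cone Q" and f: "finite T" and h: "\<forall>v\<in>T. f v \<in> Q"
  shows "sum f T \<in> Q"
  using f h
proof (induction T rule: finite_induct)
  case empty thus ?case using gc_zero[OF g] by simp
next
  case (insert x F) thus ?case using g by (simp add: gc_add)
qed

lemma gc_pointed:
  assumes g: "good_cone Q" and x: "x \<in> Q" and mx: "- x \<in> Q"
  shows "x = 0"
proof -
  have E: "Q \<inter> uminus ` Q = {0}" using g unfolding good_cone_def by (elim conjE)
  have "x = - (- x)" by simp
  hence "x \<in> uminus ` Q" using mx by (rule image_eqI)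
  hence "x \<in> Q \<inter> uminus ` Q" using x by (rule IntI[rotated])
  thus ?thesis unfolding E by simp
qed

lemma pos_functional:
  fixes P :: "'a::euclidean_space set"
  assumes gP: "good_cone P"
  shows "\<exists>a. \<forall>p\<in>P. p \<noteq> 0 \<longrightarrow> inner a p > 0"
proof -
  define S where "S = P \<inter> sphere 0 1"
  have cS: "compact S" unfolding S_def
    by (rule closed_Int_compact[OF gc_closed[OF gP] compact_sphere])
  have cvx: "compact (convex hull S)" by (rule compact_convex_hull[OF cS])
  have n0: "0 \<notin> convex hull S"
  proof
    assume "0 \<in> convex hull S"
    then obtain T u where T: "finite T" "T \<subseteq> S" "\<forall>x\<in>T. 0 \<le> u x" "sum u T = 1"
      "sum (\<lambda>v. u v *\<^sub>R v) T = 0"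
      unfolding convex_hull_explicit mem_Collect_eq by metis
    have "\<exists>v0\<in>T. u v0 > 0"
    proof (rule ccontr)
      assume nv: "\<not> (\<exists>v0\<in>T. u v0 > 0)"
      have "\<forall>v\<in>T. u v = 0"
      proof
        fix v assume v: "v \<in> T"
        have "0 \<le> u v" using T(3) v by blast
        moreover have "\<not> u v > 0" using nv v by blast
        ultimately show "u v = 0" by linarith
      qed
      hence "sum u T = 0" by simp
      thus False using T(4) by simp
    qed
    then obtain v0 where v0: "v0 \<in> T" "u v0 > 0" by blast
    define r where "r = sum (\<lambda>v. u v *\<^sub>R v) (T - {v0})"
    have "\<forall>v\<in>T - {v0}. u v *\<^sub>R v \<in> P"
    proof
      fix v assume v: "v \<in> T - {v0}"
      hence "v \<in> P" "0 \<le> u v" using T(2,3) unfolding S_def by auto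
      thus "u v *\<^sub>R v \<in> P" by (rule gc_scale[OF gP])
    qed
    hence rP: "r \<in> P" unfolding r_def using T(1) by (intro gc_sum[OF gP]) auto
    have "sum (\<lambda>v. u v *\<^sub>R v) T = u v0 *\<^sub>R v0 + r" unfolding r_def
      by (rule sum.remove[OF T(1) v0(1)])
    hence "u v0 *\<^sub>R v0 + r = 0" using T(5) by simp
    hence m: "- (u v0 *\<^sub>R v0) = r" by (rule minus_unique)
    have v0P: "v0 \<in> P" using T(2) v0(1) unfolding S_def by blast
    have "u v0 *\<^sub>R v0 \<in> P" by (rule gc_scale[OF gP v0P]) (use v0(2) in simp)
    moreover have "- (u v0 *\<^sub>R v0) \<in> P" using m rP by simp
    ultimately have "u v0 *\<^sub>R v0 = 0" by (rule gc_pointed[OF gP])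
    hence "v0 = 0" using v0(2) by simp
    thus False using T(2) v0(1) unfolding S_def by auto
  qed
  obtain a b where ab: "a \<noteq> 0" "0 < b" "\<forall>x\<in>convex hull S. inner a x > b"
    using separating_hyperplane_closed_0[OF convex_convex_hull compact_imp_closed[OF cvx] n0]
    by blast
  have "\<forall>p\<in>P. p \<noteq> 0 \<longrightarrow> inner a p > 0"
  proof (intro ballI impI)
    fix p assume p: "p \<in> P" "p \<noteq> 0"
    have "(1 / norm p) *\<^sub>R p \<in> P" by (rule gc_scale[OF gP p(1)]) simp
    moreover have "(1 / norm p) *\<^sub>R p \<in> sphere 0 1" using p(2) by (simp add: norm_divide)
    ultimately have "(1 / norm p) *\<^sub>R p \<in> S" unfolding S_def by blast
    hence "(1 / norm p) *\<^sub>R p \<in> convex hull S" by (rule hull_inc)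
    hence "inner a ((1 / norm p) *\<^sub>R p) > b" using ab(3) by blast
    hence "inner a p / norm p > 0" using ab(2) by (simp add: inner_scaleR_right)
    moreover have "norm p > 0" using p(2) by simp
    ultimately show "inner a p > 0" by (simp add: zero_less_divide_iff)
  qed
  thus ?thesis by blast
qed

lemma dominate:
  fixes P :: "'a::euclidean_space set"
  assumes gP: "good_cone P" and K: "compact K" and k: "k \<in> K"
  shows "\<exists>e\<in>eff K P. k - e \<in> P"
proof -
  obtain a where a: "\<forall>p\<in>P. p \<noteq> 0 \<longrightarrow> inner a p > 0" using pos_functional[OF gP] by blast
  define L where "L = K \<inter> {y. k - y \<in> P}"
  have cl: "closed {y. k - y \<in> P}"
  proof -
    have "closed ((\<lambda>y. k - y) -` P)"
      by (rule continuous_closed_vimage[OF gc_closed[OF gP]]) (intro continuous_intros)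
    moreover have "(\<lambda>y. k - y) -` P = {y. k - y \<in> P}" by auto
    ultimately show ?thesis by simp
  qed
  have cL: "compact L" unfolding L_def using K cl by (simp add: compact_Int_closed)
  have kL: "k \<in> L" unfolding L_def using k gc_zero[OF gP] by simp
  obtain y0 where y0: "y0 \<in> L" "\<forall>z\<in>L. inner a y0 \<le> inner a z"
    using continuous_attains_inf[OF cL _ continuous_on_inner[OF continuous_on_const continuous_on_id], of a] kL
    by blast
  have "y0 \<in> eff K P"
    unfolding eff_def
  proof (intro CollectI conjI)
    show "y0 \<in> K" using y0 L_def by auto
    show "(\<lambda>q. y0 - q) ` P \<inter> K = {y0}"
    proof
      show "{y0} \<subseteq> (\<lambda>q. y0 - q) ` P \<inter> K"
        using gc_zero[OF gP] \<open>y0 \<in> K\<close> by (simp add: image_iff)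
      show "(\<lambda>q. y0 - q) ` P \<inter> K \<subseteq> {y0}"
      proof
        fix z assume "z \<in> (\<lambda>q. y0 - q) ` P \<inter> K"
        then obtain q where q: "q \<in> P" "z = y0 - q" "z \<in> K" by blast
        have "k - z = (k - y0) + q" using q by simp
        also have "\<dots> \<in> P" using gc_add[OF gP] q y0 L_def by auto
        finally have "z \<in> L" using q L_def by auto
        hence "inner a y0 \<le> inner a z" using y0 by blast
        hence "inner a q \<le> 0" using q by (simp add: inner_diff_right)
        hence "q = 0" using a q by force
        thus "z \<in> {y0}" using q by simp
      qed
    qed
  qed
  moreover have "k - y0 \<in> P" using y0 L_def by auto
  ultimately show ?thesis by blast
qed

lemma delta:
  fixes P C :: "'a::euclidean_space set"
  assumes gP: "good_cone P" and gC: "good_cone C" and PC: "P \<subseteq> interior C \<union> {0}"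
  shows "\<exists>\<delta>>0. \<delta> \<le> 1 \<and> (\<forall>c\<in>P. \<forall>z. norm (z - c) \<le> \<delta> * norm c \<longrightarrow> z \<in> C)"
proof -
  define S where "S = P \<inter> sphere 0 1"
  have cS: "compact S" unfolding S_def
    by (rule closed_Int_compact[OF gc_closed[OF gP] compact_sphere])
  have sub: "S \<subseteq> interior C" using PC unfolding S_def by auto
  obtain \<epsilon> where e: "\<epsilon> > 0" "(\<Union>x\<in>S. cball x \<epsilon>) \<subseteq> interior C"
    using compact_subset_open_imp_cball_epsilon_subset[OF cS open_interior sub] by blast
  have "\<forall>c\<in>P. \<forall>z. norm (z - c) \<le> \<epsilon> * norm c \<longrightarrow> z \<in> C"
  proof (intro ballI allI impI)
    fix c z assume c: "c \<in> P" and z: "norm (z - c) \<le> \<epsilon> * norm c"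
    show "z \<in> C"
    proof (cases "c = 0")
      case True thus ?thesis using z gc_zero[OF gC] by simp
    next
      case False
      have "(1 / norm c) *\<^sub>R c \<in> P" by (rule gc_scale[OF gP c]) simp
      moreover have "(1 / norm c) *\<^sub>R c \<in> sphere 0 1" using False by (simp add: norm_divide)
      ultimately have x: "(1 / norm c) *\<^sub>R c \<in> S" unfolding S_def by blast
      have nc: "norm c > 0" using False by simp
      have "dist ((1 / norm c) *\<^sub>R c) ((1 / norm c) *\<^sub>R z) = norm ((1 / norm c) *\<^sub>R (c - z))"
        unfolding dist_norm scaleR_diff_right ..
      also have "\<dots> = norm (z - c) / norm c" using nc by (simp add: norm_minus_commute)
      also have "\<dots> \<le> \<epsilon>" by (subst pos_divide_le_eq[OF nc]) (rule z)
      finally have mem: "(1 / norm c) *\<^sub>R z \<in> cball ((1 / norm c) *\<^sub>R c) \<epsilon>" by simp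
      have "cball ((1 / norm c) *\<^sub>R c) \<epsilon> \<subseteq> interior C" using e(2) x by (rule UN_subset_iff[THEN iffD1, rule_format])
      hence "(1 / norm c) *\<^sub>R z \<in> interior C" using mem by blast
      hence "(1 / norm c) *\<^sub>R z \<in> C" using interior_subset by blast
      hence "norm c *\<^sub>R ((1 / norm c) *\<^sub>R z) \<in> C" by (rule gc_scale[OF gC]) simp
      moreover have "norm c *\<^sub>R ((1 / norm c) *\<^sub>R z) = z" using nc by simp
      ultimately show ?thesis by simp
    qed
  qed
  note H = this
  have "\<forall>c\<in>P. \<forall>z. norm (z - c) \<le> min \<epsilon> 1 * norm c \<longrightarrow> z \<in> C"
  proof (intro ballI allI impI)
    fix c z assume c: "c \<in> P" and z: "norm (z - c) \<le> min \<epsilon> 1 * norm c"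
    have "min \<epsilon> 1 * norm c \<le> \<epsilon> * norm c" by (rule mult_right_mono) simp_all
    hence "norm (z - c) \<le> \<epsilon> * norm c" using z by linarith
    thus "z \<in> C" by (rule H[rule_format, OF c])
  qed
  note H2 = this
  have m1: "min \<epsilon> 1 > 0" using e(1) by simp
  have m2: "min \<epsilon> 1 \<le> 1" by simp
  show ?thesis
    apply (rule exI[of _ "min \<epsilon> 1"])
    apply (rule conjI, rule m1)
    apply (rule conjI, rule m2)
    by (rule H2)
qed

lemma hd1:
  fixes K1 K2 :: "'a::euclidean_space set"
  assumes "compact K1" "compact K2" "K2 \<noteq> {}" "y \<in> K1"
  shows "infdist y K2 \<le> hdist K1 K2"
proof -
  obtain k0 where k0: "k0 \<in> K2" using assms by blast
  obtain B where B: "\<forall>x\<in>K1. norm x \<le> B" using compact_imp_bounded[OF assms(1)] bounded_iff by blast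
  have "bdd_above ((\<lambda>m. infdist m K2) ` K1)"
  proof (rule bdd_aboveI2)
    fix m assume "m \<in> K1"
    have "infdist m K2 \<le> dist m k0" using infdist_le[OF k0] .
    also have "\<dots> \<le> norm m + norm k0" by (simp add: dist_norm norm_triangle_ineq4)
    moreover have "norm m \<le> B" using B \<open>m \<in> K1\<close> by blast
    ultimately show "infdist m K2 \<le> B + norm k0" by linarith
  qed
  hence "infdist y K2 \<le> (SUP m1\<in>K1. infdist m1 K2)" using assms(4) by (rule cSUP_upper2) simp
  thus ?thesis unfolding hdist_def by simp
qed

lemma hd_sym: "hdist A B = hdist B A"
  unfolding hdist_def by simp

lemma one_dir:
  fixes P C :: "'a::euclidean_space set"
  assumes gP: "good_cone P" and gC: "good_cone C" and d: "\<delta> > 0" and d1: "\<delta> \<le> 1"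
    and dd: "\<forall>c\<in>P. \<forall>z. norm (z - c) \<le> \<delta> * norm c \<longrightarrow> z \<in> C"
    and K1: "K1 \<in> Kclass C P" and K2: "K2 \<in> Kclass C P"
    and y1: "y1 \<in> eff K1 P"
  shows "infdist y1 (eff K2 P) \<le> (1 + 2 / \<delta>) * hdist K1 K2"
proof -
  define h where "h = hdist K1 K2"
  have K1c: "compact K1" "K1 \<noteq> {}" "eff K1 P = eff K1 C" using K1 unfolding Kclass_def by auto
  have K2c: "compact K2" "K2 \<noteq> {}" "eff K2 P = eff K2 C" using K2 unfolding Kclass_def by auto
  have y1K: "y1 \<in> K1" using y1 unfolding eff_def by auto
  have y1C: "(\<lambda>q. y1 - q) ` C \<inter> K1 = {y1}" using y1 K1c(3) unfolding eff_def by auto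
  obtain k2 where k2: "k2 \<in> K2" "infdist y1 K2 = dist y1 k2"
    using infdist_attains_inf[OF compact_imp_closed[OF K2c(1)] K2c(2)] by blast
  have dk2: "dist y1 k2 \<le> h" using hd1[OF K1c(1) K2c(1,2) y1K] k2 h_def by simp
  obtain e2 where e2: "e2 \<in> eff K2 P" "k2 - e2 \<in> P" using dominate[OF gP K2c(1) k2(1)] by blast
  have e2K: "e2 \<in> K2" using e2 unfolding eff_def by auto
  obtain k1 where k1: "k1 \<in> K1" "infdist e2 K1 = dist e2 k1"
    using infdist_attains_inf[OF compact_imp_closed[OF K1c(1)] K1c(2)] by blast
  have dk1: "dist e2 k1 \<le> h" using hd1[OF K2c(1) K1c(1,2) e2K] k1 h_def hd_sym[of K2 K1] by simp
  define c where "c = k2 - e2"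
  have h0: "h \<ge> 0" using dk1 zero_le_dist[of e2 k1] by linarith
  have cb: "norm c \<le> 2 * h / \<delta>"
  proof (rule ccontr)
    assume "\<not> ?thesis"
    hence lt: "2 * h < \<delta> * norm c" using d by (simp add: field_simps)
    define z where "z = y1 - k1"
    have zc: "z - c = (y1 - k2) + (e2 - k1)" unfolding z_def c_def by simp
    have "norm (z - c) \<le> norm (y1 - k2) + norm (e2 - k1)" unfolding zc by (rule norm_triangle_ineq)
    also have "\<dots> \<le> 2 * h" using dk1 dk2 by (simp add: dist_norm)
    finally have nz: "norm (z - c) \<le> 2 * h" .
    hence "norm (z - c) \<le> \<delta> * norm c" using lt by linarith
    hence "z \<in> C" using dd e2(2) unfolding c_def by blast
    hence "y1 - z \<in> (\<lambda>q. y1 - q) ` C" by (rule imageI)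
    hence "y1 - z \<in> (\<lambda>q. y1 - q) ` C \<inter> K1" using k1 z_def by simp
    hence "y1 - z \<in> {y1}" using y1C by simp
    hence "y1 - z = y1" by simp
    hence "z = 0" by simp
    hence "norm c \<le> 2 * h" using nz by simp
    moreover have "norm c > 0"
    proof -
      have "\<delta> * norm c > 0" using lt h0 by linarith
      thus ?thesis using d by (simp add: zero_less_mult_iff)
    qed
    moreover have "\<delta> * norm c \<le> norm c" using \<open>norm c > 0\<close> d1 by (simp add: mult_le_cancel_right1)
    ultimately show False using lt by linarith
  qed
  have "infdist y1 (eff K2 P) \<le> dist y1 e2" by (rule infdist_le[OF e2(1)])
  also have "\<dots> \<le> dist y1 k2 + dist k2 e2" by (rule dist_triangle)
  also have "\<dots> \<le> h + 2 * h / \<delta>" using dk2 cb by (simp add: dist_norm c_def)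
  also have "\<dots> = (1 + 2 / \<delta>) * h" by (simp add: field_simps)
  finally show ?thesis unfolding h_def .
qed

theorem proposition4p13:
  fixes C P :: "'a::euclidean_space set"
  assumes "good_cone P" and "good_cone C"
    and "P \<subseteq> interior C \<union> {0}"
  shows "\<exists>M\<ge>0. \<forall>K1\<in>Kclass C P. \<forall>K2\<in>Kclass C P.
           hdist (eff K1 P) (eff K2 P) \<le> M * hdist K1 K2"
proof -
  obtain \<delta> where d: "\<delta> > 0" "\<delta> \<le> 1"
    and dd: "\<forall>c\<in>P. \<forall>z. norm (z - c) \<le> \<delta> * norm c \<longrightarrow> z \<in> C"
    using delta[OF assms] by blast
  have "\<forall>K1\<in>Kclass C P. \<forall>K2\<in>Kclass C P.
           hdist (eff K1 P) (eff K2 P) \<le> (1 + 2 / \<delta>) * hdist K1 K2"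
  proof (intro ballI)
    fix K1 K2 assume K1: "K1 \<in> Kclass C P" and K2: "K2 \<in> Kclass C P"
    have ne: "eff K P \<noteq> {}" if "K \<in> Kclass C P" for K
    proof -
      from that obtain k where "k \<in> K" "compact K" unfolding Kclass_def by blast
      thus ?thesis using dominate[OF assms(1)] by blast
    qed
    show "hdist (eff K1 P) (eff K2 P) \<le> (1 + 2 / \<delta>) * hdist K1 K2"
    proof -
      have A: "(SUP m1\<in>eff K1 P. infdist m1 (eff K2 P)) \<le> (1 + 2 / \<delta>) * hdist K1 K2"
        using ne[OF K1] one_dir[OF assms(1,2) d dd K1 K2] by (intro cSUP_least) auto
      have B: "(SUP m2\<in>eff K2 P. infdist m2 (eff K1 P)) \<le> (1 + 2 / \<delta>) * hdist K1 K2"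
        using ne[OF K2] one_dir[OF assms(1,2) d dd K2 K1] hd_sym[of K1 K2]
        by (intro cSUP_least) auto
      show ?thesis using A B by (simp only: hdist_def[of "eff K1 P"] max.bounded_iff)
    qed
  qed
  moreover have "1 + 2 / \<delta> \<ge> 0" using d by simp
  ultimately show ?thesis by blast
qed

end
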